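(* Let $G=(V,E)$ be an $r$-rank connected graph and let $X,Y\subseteq V$ be $r$-splits of $G$ with $|X\cap Y|\ge r$. Then $X\cup Y$ is an $r$-split of $G$.
   Context: For $X\subseteq V$, $\overline X=V\setminus X$, and $\rho(X)$ is the rank over $\mathbb F_2$ of the submatrix of the adjacency matrix of $G$ with rows indexed by $X$ and columns by $\overline X$. $X$ is a $k$-split if $\rho(X)\le k$, and trivial if $\rho(X)=\min(|X|,|\overline X|)$. $G$ is $r$-rank connected if every $k$-split with $k<r$ is trivial. *)

theory Defs
  imports Complex_Main "HOL-Library.Z2" "HOL-Library.Function_Algebras"
begin

definition gf2_scale :: "bit \<Rightarrow> ('a \<Rightarrow> bit) \<Rightarrow> ('a \<Rightarrow> bit)" where
  "gf2_scale c f = (\<lambda>y. c * f y)"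

global_interpretation gf2: vector_space "gf2_scale :: bit \<Rightarrow> ('a \<Rightarrow> bit) \<Rightarrow> ('a \<Rightarrow> bit)"
  defines gf2_dim = gf2.dim
  by unfold_locales (auto simp: gf2_scale_def fun_eq_iff algebra_simps)

definition simple_graph :: "'a set \<Rightarrow> ('a \<Rightarrow> 'a \<Rightarrow> bool) \<Rightarrow> bool" where
  "simple_graph V E \<longleftrightarrow> finite V \<and> (\<forall>x y. E x y \<longrightarrow> E y x) \<and> (\<forall>x. \<not> E x x)
     \<and> (\<forall>x y. E x y \<longrightarrow> x \<in> V \<and> y \<in> V)"

text \<open>Row x of the submatrix of the adjacency matrix with rows X and columns V - X
(entries outside the column set V - X are set to 0).\<close>
definition cut_row :: "'a set \<Rightarrow> ('a \<Rightarrow> 'a \<Rightarrow> bool) \<Rightarrow> 'a set \<Rightarrow> 'a \<Rightarrow> ('a \<Rightarrow> bit)" where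
  "cut_row V E X x = (\<lambda>y. if y \<in> V - X then of_bool (E x y) else 0)"

text \<open>\<rho>(X): rank over GF(2) of the submatrix (= dimension of its row space).\<close>
definition cutrank :: "'a set \<Rightarrow> ('a \<Rightarrow> 'a \<Rightarrow> bool) \<Rightarrow> 'a set \<Rightarrow> nat" where
  "cutrank V E X = gf2_dim (cut_row V E X ` X)"

definition k_split :: "'a set \<Rightarrow> ('a \<Rightarrow> 'a \<Rightarrow> bool) \<Rightarrow> nat \<Rightarrow> 'a set \<Rightarrow> bool" where
  "k_split V E k X \<longleftrightarrow> X \<subseteq> V \<and> cutrank V E X \<le> k"

definition trivial_split :: "'a set \<Rightarrow> ('a \<Rightarrow> 'a \<Rightarrow> bool) \<Rightarrow> 'a set \<Rightarrow> bool" where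
  "trivial_split V E X \<longleftrightarrow> cutrank V E X = min (card X) (card (V - X))"

definition rank_connected :: "'a set \<Rightarrow> ('a \<Rightarrow> 'a \<Rightarrow> bool) \<Rightarrow> nat \<Rightarrow> bool" where
  "rank_connected V E r \<longleftrightarrow>
     (\<forall>k X. k < r \<longrightarrow> k_split V E k X \<longrightarrow> trivial_split V E X)"

end

theory Submission
  imports Defs
begin


lemma bitfun_self [simp]: "(f::'a \<Rightarrow> bit) + f = 0"
proof (rule ext)
  fix z show "(f + f) z = (0::'a\<Rightarrow>bit) z" by (cases "f z") simp_all
qed

lemma bitfun_self2 [simp]: "(f::'a \<Rightarrow> bit) + (f + g) = g"
  by (metis add.assoc add_0 bitfun_self)

lemma bitfun_self3 [simp]: "(g::'a \<Rightarrow> bit) + f + f = g"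
  by (metis add.assoc add_0_right bitfun_self)

lemma sum_apply_fun: "(sum g T) z = (\<Sum>x\<in>T. (g x :: 'a \<Rightarrow> bit) z)"
  by (induction T rule: infinite_finite_induct) auto

definition gsp :: "('i \<Rightarrow> 'a \<Rightarrow> bit) \<Rightarrow> 'i set \<Rightarrow> ('a \<Rightarrow> bit) set" where
  "gsp g P = {sum g T | T. T \<subseteq> P}"

lemma sum_symdiff:
  assumes "finite T1" "finite T2"
  shows "sum (g :: 'i \<Rightarrow> 'a \<Rightarrow> bit) T1 + sum g T2 = sum g ((T1 - T2) \<union> (T2 - T1))"
proof -
  have 1: "sum g T1 = sum g (T1 - T2) + sum g (T1 \<inter> T2)"
    using assms by (metis Diff_Diff_Int Diff_subset add.commute sum.subset_diff inf_le1)
  have 2: "sum g T2 = sum g (T2 - T1) + sum g (T1 \<inter> T2)"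
    using assms by (metis Diff_Diff_Int Diff_subset add.commute sum.subset_diff inf_le2 inf_commute)
  have 3: "sum g ((T1 - T2) \<union> (T2 - T1)) = sum g (T1 - T2) + sum g (T2 - T1)"
    using assms by (intro sum.union_disjoint) auto
  show ?thesis unfolding 1 2 3 by (simp add: algebra_simps)
qed

lemma gsp_zero: "0 \<in> gsp g P"
  unfolding gsp_def by (auto intro!: exI[of _ "{}"])

lemma gsp_add:
  assumes "finite P" "x \<in> gsp g P" "y \<in> gsp g P"
  shows "x + y \<in> gsp g P"
proof -
  obtain T1 T2 where "T1 \<subseteq> P" "T2 \<subseteq> P" "x = sum g T1" "y = sum g T2"
    using assms unfolding gsp_def by auto
  then show ?thesis unfolding gsp_def
    using sum_symdiff[of T1 T2 g] assms(1) finite_subset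
    by (intro CollectI exI[of _ "(T1 - T2) \<union> (T2 - T1)"]) auto
qed

lemma gsp_base: "x \<in> P \<Longrightarrow> g x \<in> gsp g P"
  unfolding gsp_def by (auto intro!: exI[of _ "{x}"])

lemma gsp_mono: "P \<subseteq> Q \<Longrightarrow> gsp g P \<subseteq> gsp g Q"
  unfolding gsp_def by auto

lemma gsp_finite: "finite P \<Longrightarrow> finite (gsp g P)"
proof -
  assume "finite P"
  have "gsp g P = sum g ` Pow P" unfolding gsp_def by auto
  then show ?thesis using \<open>finite P\<close> by simp
qed

lemma span_gsp:
  assumes "finite P"
  shows "gf2.span (g ` P) = gsp g P"
proof (rule gf2.span_subspace)
  show "g ` P \<subseteq> gsp g P" using gsp_base by auto
  show "gsp g P \<subseteq> gf2.span (g ` P)"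
  proof
    fix x assume "x \<in> gsp g P"
    then obtain T where "T \<subseteq> P" "x = sum g T" unfolding gsp_def by auto
    then show "x \<in> gf2.span (g ` P)"
      by (metis gf2.span_base gf2.span_sum image_eqI subsetD)
  qed
  show "gf2.subspace (gsp g P)"
  proof (rule gf2.subspaceI)
    show "0 \<in> gsp g P" by (rule gsp_zero)
    show "x + y \<in> gsp g P" if "x \<in> gsp g P" "y \<in> gsp g P" for x y
      using gsp_add assms that by blast
    show "gf2_scale c x \<in> gsp g P" if "x \<in> gsp g P" for c x
    proof (cases c)
      case zero
      then have "gf2_scale c x = 0" by (simp add: gf2_scale_def fun_eq_iff)
      then show ?thesis using gsp_zero by metis
    next
      case one
      then have "gf2_scale c x = x" by (simp add: gf2_scale_def fun_eq_iff)
      then show ?thesis using that by simp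
    qed
  qed
qed

lemma card_span:
  assumes "finite S"
  shows "card (gf2.span S) = 2 ^ gf2_dim S"
proof -
  obtain B where B: "B \<subseteq> S" "gf2.independent B" "S \<subseteq> gf2.span B" "card B = gf2_dim S"
    using gf2.basis_exists by blast
  have fB: "finite B" using B(1) assms finite_subset by blast
  have "gf2.span B = gf2.span S"
    using B by (metis gf2.span_eq gf2.span_superset subset_trans)
  moreover have "gf2.span B = gsp id B"
    using span_gsp[OF fB, of id] by simp
  moreover have "gsp id B = sum id ` Pow B" unfolding gsp_def by auto
  moreover have "inj_on (sum id) (Pow B)"
  proof (rule inj_onI)
    fix T1 T2 assume T: "T1 \<in> Pow B" "T2 \<in> Pow B" "sum id T1 = sum id (T2::('a\<Rightarrow>bit) set)"
    have fT: "finite T1" "finite T2" using T fB finite_subset by auto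
    let ?D = "(T1 - T2) \<union> (T2 - T1)"
    have "sum id ?D = 0" using sum_symdiff[OF fT, of id] T(3) by simp
    have s1: "\<And>v::'a\<Rightarrow>bit. gf2_scale 1 v = v" by (simp add: gf2_scale_def fun_eq_iff)
    then have z: "(\<Sum>v\<in>?D. gf2_scale 1 v) = 0" using \<open>sum id ?D = 0\<close> by simp
    have "?D = {}"
    proof (rule ccontr)
      assume "?D \<noteq> {}"
      then obtain v where "v \<in> ?D" by blast
      have "(\<lambda>_. 1::bit) v = 0"
        using gf2.independentD[OF B(2), of ?D "\<lambda>_. 1" v] z \<open>v \<in> ?D\<close> fT T(1,2) by auto
      then show False by simp
    qed
    then show "T1 = T2" by blast
  qed
  ultimately have "card (gf2.span S) = card (Pow B)" by (metis card_image)
  then show ?thesis using B(4) fB by (simp add: card_Pow)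
qed



definition grp :: "('a \<Rightarrow> bit) set \<Rightarrow> bool" where
  "grp U \<longleftrightarrow> 0 \<in> U \<and> (\<forall>x\<in>U. \<forall>y\<in>U. x + y \<in> U)"

lemma fiber_count:
  assumes "finite U" "\<And>w. w \<in> h ` U \<Longrightarrow> card {u\<in>U. h u = w} = k"
  shows "card U = card (h ` U) * k"
proof -
  have U: "U = (\<Union>w\<in>h ` U. {u\<in>U. h u = w})" by auto
  have "card (\<Union>w\<in>h ` U. {u\<in>U. h u = w}) = (\<Sum>w\<in>h ` U. card {u\<in>U. h u = w})"
    by (rule card_UN_disjoint) (auto simp: assms(1))
  also have "\<dots> = (\<Sum>w\<in>h ` U. k)" using assms(2) by (rule sum.cong[OF refl])
  finally show ?thesis using U by simp
qed

lemma rank_nullity_card: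
  assumes "finite U" "grp U" "\<And>x y. h (x + y) = h x + (h y :: 'b \<Rightarrow> bit)"
  shows "card U = card (h ` U) * card {u\<in>U. h u = 0}"
proof (rule fiber_count[OF assms(1)])
  fix w assume "w \<in> h ` U"
  then obtain u0 where u0: "u0 \<in> U" "w = h u0" by auto
  have "{u\<in>U. h u = w} = (\<lambda>c. u0 + c) ` {c\<in>U. h c = 0}"
  proof (intro equalityI subsetI)
    fix u assume "u \<in> {u\<in>U. h u = w}"
    then have u: "u \<in> U" "h u = h u0" using u0 by auto
    have "u0 + u \<in> U" using u u0 assms(2) unfolding grp_def by auto
    moreover have "h (u0 + u) = 0" using u assms(3) by simp
    moreover have "u = u0 + (u0 + u)" by simp
    ultimately show "u \<in> (\<lambda>c. u0 + c) ` {c\<in>U. h c = 0}" by blast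
  next
    fix u assume "u \<in> (\<lambda>c. u0 + c) ` {c\<in>U. h c = 0}"
    then obtain c where c: "c \<in> U" "h c = 0" "u = u0 + c" by auto
    then show "u \<in> {u\<in>U. h u = w}" using u0 assms(2,3) unfolding grp_def by auto
  qed
  moreover have "inj_on (\<lambda>c. u0 + c) {c\<in>U. h c = 0}" by (rule inj_onI) simp
  ultimately show "card {u\<in>U. h u = w} = card {u\<in>U. h u = 0}" by (simp add: card_image)
qed

lemma grassmann_card:
  assumes "finite A" "finite B" "grp A" "grp B"
  shows "card A * card B = card {a + b | a b. a \<in> A \<and> b \<in> B} * card (A \<inter> B)"
proof -
  define h where "h = (\<lambda>p. fst p + (snd p :: 'a \<Rightarrow> bit))"
  have im: "h ` (A \<times> B) = {a + b | a b. a \<in> A \<and> b \<in> B}" unfolding h_def by force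
  have "card (A \<times> B) = card (h ` (A \<times> B)) * card (A \<inter> B)"
  proof (rule fiber_count)
    show "finite (A \<times> B)" using assms(1,2) by (rule finite_cartesian_product)
    fix w assume "w \<in> h ` (A \<times> B)"
    then obtain a0 b0 where ab0: "a0 \<in> A" "b0 \<in> B" "w = a0 + b0" unfolding h_def by force
    have "{p\<in>A \<times> B. h p = w} = (\<lambda>c. (a0 + c, b0 + c)) ` (A \<inter> B)"
    proof (intro equalityI subsetI)
      fix p assume "p \<in> {p\<in>A \<times> B. h p = w}"
      then obtain a b where p: "p = (a, b)" "a \<in> A" "b \<in> B" "a + b = a0 + b0"
        using ab0 unfolding h_def by (cases p) auto
      define c where "c = a0 + a"
      have e1: "a0 + c = a" unfolding c_def by (rule bitfun_self2)
      have "b = a + (a + b)" by (rule bitfun_self2[symmetric])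
      also have "\<dots> = a + (a0 + b0)" using p(4) by (rule arg_cong)
      finally have e2: "b0 + c = b" unfolding c_def by (metis add.assoc add.commute bitfun_self2)
      have cA: "c \<in> A" using p(2) ab0(1) assms(3) unfolding grp_def c_def by blast
      have "c = b0 + b" using e2 by (metis bitfun_self2)
      then have cB: "c \<in> B" using p(3) ab0(2) assms(4) unfolding grp_def by blast
      have "p = (a0 + c, b0 + c)" using e1 e2 p(1) by simp
      then show "p \<in> (\<lambda>c. (a0 + c, b0 + c)) ` (A \<inter> B)" using cA cB by blast
    next
      fix p assume "p \<in> (\<lambda>c. (a0 + c, b0 + c)) ` (A \<inter> B)"
      then obtain c where c: "c \<in> A" "c \<in> B" "p = (a0 + c, b0 + c)" by auto
      have s: "a0 + c + (b0 + c) = a0 + b0" by (metis add.assoc add.commute bitfun_self3)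
      have "a0 + c \<in> A" "b0 + c \<in> B" using c ab0 assms(3,4) unfolding grp_def by blast+
      then show "p \<in> {p\<in>A \<times> B. h p = w}"
        using c(3) s ab0(3) unfolding h_def by simp
    qed
    moreover have "inj_on (\<lambda>c. (a0 + c, b0 + c)) (A \<inter> B)" by (rule inj_onI) simp
    ultimately show "card {p\<in>A \<times> B. h p = w} = card (A \<inter> B)" by (simp add: card_image)
  qed
  then show ?thesis using im by (simp add: card_cartesian_product)
qed



definition rw :: "('a \<Rightarrow> 'a \<Rightarrow> bool) \<Rightarrow> 'a \<Rightarrow> 'a \<Rightarrow> bit" where
  "rw E x = (\<lambda>z. of_bool (E x z))"

definition res :: "'a set \<Rightarrow> ('a \<Rightarrow> bit) \<Rightarrow> ('a \<Rightarrow> bit)" where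
  "res Q f = (\<lambda>z. if z \<in> Q then f z else 0)"

definition Ker :: "'a set \<Rightarrow> ('a \<Rightarrow> bit) set" where
  "Ker Q = {f. \<forall>z\<in>Q. f z = 0}"

definition psum :: "('a \<Rightarrow> bit) set \<Rightarrow> ('a \<Rightarrow> bit) set \<Rightarrow> ('a \<Rightarrow> bit) set" where
  "psum S T = {a + b | a b. a \<in> S \<and> b \<in> T}"

lemma res_add: "res Q (f + g) = res Q f + res Q g"
  by (simp add: res_def fun_eq_iff)

lemma res_sum: "res Q (sum g T) = sum (\<lambda>x. res Q (g x)) T"
  by (simp add: res_def fun_eq_iff sum_apply_fun)

lemma cut_row_eq: "cut_row V E X = (\<lambda>x. res (V - X) (rw E x))"
  by (simp add: cut_row_def res_def rw_def fun_eq_iff)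

lemma gsp_res: "gsp (\<lambda>x. res Q (g x)) P = res Q ` gsp g P"
  unfolding gsp_def by (auto simp: res_sum[symmetric])

lemma rank_card:
  assumes "finite X"
  shows "2 ^ cutrank V E X = card (res (V - X) ` gsp (rw E) X)"
proof -
  have "2 ^ cutrank V E X = card (gf2.span (cut_row V E X ` X))"
    unfolding cutrank_def using card_span[of "cut_row V E X ` X"] assms by simp
  also have "\<dots> = card (gsp (cut_row V E X) X)" using span_gsp assms by metis
  finally show ?thesis unfolding cut_row_eq gsp_res .
qed

lemma grp_gsp: "finite P \<Longrightarrow> grp (gsp g P)"
  unfolding grp_def using gsp_zero gsp_add by blast

lemma grp_Ker: "grp (Ker Q)"
  unfolding grp_def Ker_def by simp

lemma grp_Int: "grp A \<Longrightarrow> grp B \<Longrightarrow> grp (A \<inter> B)"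
  unfolding grp_def by blast

lemma ker_res: "{u\<in>U. res Q u = 0} = U \<inter> Ker Q"
  by (auto simp: res_def Ker_def fun_eq_iff)

lemma rn_res:
  assumes "finite U" "grp U"
  shows "card U = card (res Q ` U) * card (U \<inter> Ker Q)"
  using rank_nullity_card[OF assms, of "res Q"] res_add ker_res by metis

lemma card_pos_grp: "finite U \<Longrightarrow> grp U \<Longrightarrow> card U > 0"
  unfolding grp_def by (auto simp: card_gt_0_iff)

lemma submod:
  assumes fX: "finite X" and fY: "finite Y"
  shows "cutrank V E (X \<inter> Y) + cutrank V E (X \<union> Y) \<le> cutrank V E X + cutrank V E Y"
proof -
  define U1 where "U1 = gsp (rw E) X"
  define U2 where "U2 = gsp (rw E) Y"
  define Ua where "Ua = gsp (rw E) (X \<inter> Y)"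
  define Ub where "Ub = gsp (rw E) (X \<union> Y)"
  define A where "A = U1 \<inter> Ker (V - X)"
  define B where "B = U2 \<inter> Ker (V - Y)"
  have fin: "finite U1" "finite U2" "finite Ua" "finite Ub"
    unfolding U1_def U2_def Ua_def Ub_def using fX fY by (auto intro: gsp_finite)
  have grps: "grp U1" "grp U2" "grp Ua" "grp Ub"
    unfolding U1_def U2_def Ua_def Ub_def using fX fY by (auto intro: grp_gsp)
  have finAB: "finite A" "finite B" "finite (U1 \<inter> U2)" unfolding A_def B_def using fin by auto
  have grpAB: "grp A" "grp B" "grp (U1 \<inter> U2)"
    unfolding A_def B_def using grps grp_Ker grp_Int by auto
  define p1 where "p1 = (2::nat) ^ cutrank V E X"
  define p2 where "p2 = (2::nat) ^ cutrank V E Y"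
  define pa where "pa = (2::nat) ^ cutrank V E (X \<inter> Y)"
  define pb where "pb = (2::nat) ^ cutrank V E (X \<union> Y)"
  have e1: "p1 = card (res (V - X) ` U1)" unfolding p1_def U1_def by (rule rank_card[OF fX])
  have f1: "card U1 = p1 * card A"
    using rn_res[OF fin(1) grps(1), of "V - X"] e1 unfolding A_def by simp
  have e2: "p2 = card (res (V - Y) ` U2)" unfolding p2_def U2_def by (rule rank_card[OF fY])
  have f2: "card U2 = p2 * card B"
    using rn_res[OF fin(2) grps(2), of "V - Y"] e2 unfolding B_def by simp
  define md where "md = card (res (V - (X \<inter> Y)) ` (U1 \<inter> U2))"
  have KK: "Ker (V - (X \<inter> Y)) = Ker (V - X) \<inter> Ker (V - Y)" unfolding Ker_def by auto
  have f3: "card (U1 \<inter> U2) = md * card (A \<inter> B)"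
  proof -
    have "card (U1 \<inter> U2) = md * card ((U1 \<inter> U2) \<inter> Ker (V - (X \<inter> Y)))"
      unfolding md_def by (rule rn_res[OF finAB(3) grpAB(3)])
    moreover have "(U1 \<inter> U2) \<inter> Ker (V - (X \<inter> Y)) = A \<inter> B" unfolding A_def B_def KK by blast
    ultimately show ?thesis by simp
  qed
  have f4: "pa \<le> md"
  proof -
    have "Ua \<subseteq> U1" unfolding Ua_def U1_def by (rule gsp_mono) blast
    moreover have "Ua \<subseteq> U2" unfolding Ua_def U2_def by (rule gsp_mono) blast
    ultimately have "Ua \<subseteq> U1 \<inter> U2" by blast
    then have "res (V - (X \<inter> Y)) ` Ua \<subseteq> res (V - (X \<inter> Y)) ` (U1 \<inter> U2)" by blast
    then have "card (res (V - (X \<inter> Y)) ` Ua) \<le> md"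
      unfolding md_def using finAB(3) by (intro card_mono) simp_all
    moreover have "pa = card (res (V - (X \<inter> Y)) ` Ua)" unfolding pa_def Ua_def
      by (rule rank_card) (use fX in simp)
    ultimately show ?thesis by simp
  qed
  have eb: "pb = card (res (V - (X \<union> Y)) ` Ub)" unfolding pb_def Ub_def
    by (rule rank_card) (use fX fY in simp)
  have f5: "card Ub = pb * card (Ub \<inter> Ker (V - (X \<union> Y)))"
    using rn_res[OF fin(4) grps(4), of "V - (X \<union> Y)"] eb by simp
  have G1: "card U1 * card U2 = card (psum U1 U2) * card (U1 \<inter> U2)"
    unfolding psum_def using grassmann_card fin(1,2) grps(1,2) by blast
  have G2: "card A * card B = card (psum A B) * card (A \<inter> B)"
    unfolding psum_def using grassmann_card finAB(1,2) grpAB(1,2) by blast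
  have s1: "psum U1 U2 = Ub"
  proof (intro equalityI subsetI)
    fix w assume "w \<in> psum U1 U2"
    then obtain a b where ab: "a \<in> U1" "b \<in> U2" "w = a + b" unfolding psum_def by blast
    have "U1 \<subseteq> Ub" unfolding U1_def Ub_def by (rule gsp_mono) blast
    moreover have "U2 \<subseteq> Ub" unfolding U2_def Ub_def by (rule gsp_mono) blast
    ultimately have "a \<in> Ub" "b \<in> Ub" using ab by blast+
    then show "w \<in> Ub" using ab(3) gsp_add fX fY unfolding Ub_def by blast
  next
    fix w assume "w \<in> Ub"
    then obtain T where T: "T \<subseteq> X \<union> Y" "w = sum (rw E) T" unfolding Ub_def gsp_def by blast
    have fT: "finite T" using T(1) fX fY finite_subset by blast
    have "w = sum (rw E) (T \<inter> X) + sum (rw E) (T - X)"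
      using T(2) by (simp add: sum.Int_Diff[OF fT])
    moreover have "sum (rw E) (T \<inter> X) \<in> U1" unfolding U1_def gsp_def by blast
    moreover have "sum (rw E) (T - X) \<in> U2" unfolding U2_def gsp_def using T(1) by blast
    ultimately show "w \<in> psum U1 U2" unfolding psum_def by blast
  qed
  have s2: "card (psum A B) \<le> card (Ub \<inter> Ker (V - (X \<union> Y)))"
  proof (rule card_mono)
    show "finite (Ub \<inter> Ker (V - (X \<union> Y)))" using fin(4) by simp
    show "psum A B \<subseteq> Ub \<inter> Ker (V - (X \<union> Y))"
    proof
      fix w assume "w \<in> psum A B"
      then obtain a b where ab: "a \<in> A" "b \<in> B" "w = a + b" unfolding psum_def by blast
      have "w \<in> psum U1 U2" using ab unfolding psum_def A_def B_def by blast
      then have "w \<in> Ub" using s1 by simp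
      moreover have "w \<in> Ker (V - (X \<union> Y))"
        using ab unfolding A_def B_def Ker_def by auto
      ultimately show "w \<in> Ub \<inter> Ker (V - (X \<union> Y))" by blast
    qed
  qed
  have posA: "card A > 0" "card B > 0" using card_pos_grp finAB grpAB by auto
  have posm: "card (A \<inter> B) > 0"
    using card_pos_grp[of "A \<inter> B"] finAB(1) grp_Int[OF grpAB(1,2)] by simp
  define nbk where "nbk = card (Ub \<inter> Ker (V - (X \<union> Y)))"
  define m' where "m' = card (A \<inter> B)"
  have "pa * pb * (card A * card B) = pa * pb * (card (psum A B) * m')"
    using G2 m'_def by simp
  also have "\<dots> = (pb * card (psum A B)) * pa * m'" by (simp add: ac_simps)
  also have "\<dots> \<le> (pb * nbk) * md * m'"
    using s2 f4 nbk_def by (intro mult_le_mono) auto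
  also have "\<dots> = card Ub * (md * m')" using f5 nbk_def by (simp add: ac_simps)
  also have "\<dots> = card (psum U1 U2) * card (U1 \<inter> U2)" using s1 f3 m'_def by simp
  also have "\<dots> = card U1 * card U2" using G1 by simp
  also have "\<dots> = p1 * p2 * (card A * card B)" using f1 f2 by (simp add: ac_simps)
  finally have "pa * pb \<le> p1 * p2" using posA by simp
  then have "(2::nat) ^ (cutrank V E (X \<inter> Y) + cutrank V E (X \<union> Y)) \<le> 2 ^ (cutrank V E X + cutrank V E Y)"
    unfolding pa_def pb_def p1_def p2_def by (simp add: power_add)
  then show ?thesis by (rule power_le_imp_le_exp[rotated]) simp
qed

lemma rank_le_compl:
  assumes "finite Z" "finite V"
  shows "cutrank V E Z \<le> card (V - Z)"
proof -
  let ?S = "res (V - Z) ` gsp (rw E) Z"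
  let ?f = "\<lambda>f::'a \<Rightarrow> bit. {z. f z = 1}"
  have "inj_on ?f ?S"
  proof (rule inj_onI)
    fix f g :: "'a \<Rightarrow> bit" assume "{z. f z = 1} = {z. g z = 1}"
    then have "\<And>z. (f z = 1) = (g z = 1)" by blast
    then show "f = g" by (metis bit_not_one_iff ext)
  qed
  moreover have "?f ` ?S \<subseteq> Pow (V - Z)" by (auto simp: res_def split: if_splits)
  ultimately have "card ?S \<le> card (Pow (V - Z))"
    using assms by (intro card_inj_on_le) auto
  then have "(2::nat) ^ cutrank V E Z \<le> 2 ^ card (V - Z)"
    using rank_card[OF assms(1)] assms by (simp add: card_Pow)
  then show ?thesis by (rule power_le_imp_le_exp[rotated]) simp
qed

theorem mainTheorem6:
  fixes V :: "'a set" and E :: "'a \<Rightarrow> 'a \<Rightarrow> bool" and r :: nat and X Y :: "'a set"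
  assumes "simple_graph V E"
    and "rank_connected V E r"
    and "k_split V E r X" and "k_split V E r Y"
    and "card (X \<inter> Y) \<ge> r"
  shows "k_split V E r (X \<union> Y)"
proof -
  have fV: "finite V" using assms(1) unfolding simple_graph_def by blast
  have XV: "X \<subseteq> V" and rX: "cutrank V E X \<le> r" using assms(3) unfolding k_split_def by auto
  have YV: "Y \<subseteq> V" and rY: "cutrank V E Y \<le> r" using assms(4) unfolding k_split_def by auto
  have fX: "finite X" and fY: "finite Y" using XV YV fV finite_subset by auto
  have sm: "cutrank V E (X \<inter> Y) + cutrank V E (X \<union> Y) \<le> cutrank V E X + cutrank V E Y"
    by (rule submod[OF fX fY])
  have "cutrank V E (X \<union> Y) \<le> r"
  proof (cases "cutrank V E (X \<inter> Y) < r")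
    case False
    then show ?thesis using sm rX rY by linarith
  next
    case True
    have "k_split V E (cutrank V E (X \<inter> Y)) (X \<inter> Y)"
      unfolding k_split_def using XV by auto
    then have "trivial_split V E (X \<inter> Y)"
      using assms(2) True unfolding rank_connected_def by blast
    then have eq: "cutrank V E (X \<inter> Y) = min (card (X \<inter> Y)) (card (V - (X \<inter> Y)))"
      unfolding trivial_split_def .
    then have eq2: "cutrank V E (X \<inter> Y) = card (V - (X \<inter> Y))"
      using True assms(5) by linarith
    have "cutrank V E (X \<union> Y) \<le> card (V - (X \<union> Y))"
      using rank_le_compl fX fY fV by (metis finite_UnI)
    also have "\<dots> \<le> card (V - (X \<inter> Y))" using fV by (intro card_mono) auto
    finally show ?thesis using eq2 True by linarith
  qed
  then show ?thesis unfolding k_split_def using XV YV by auto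
qed

end
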